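(* In the $\beta$-model, under the null $H_0:\beta_i=\beta_i^0$, $i=1,\dots,r$ with a fixed positive integer $r$, if $b_n^3/c_n=o(n/\log n)$, then with probability at least $1-O(n^{-1})$, $$\max_{i=r+1,\dots,n}|\widehat\beta_i-\widehat\beta_i^0|\lesssim\frac{b_n^3\log n}{nc_n}.$$
   Context: $\beta$-model: $a_{ij}=a_{ji}\in\{0,1\}$, $1\le i<j\le n$, independent with $P(a_{ij}=1)=e^{\beta_i+\beta_j}/(1+e^{\beta_i+\beta_j})$ where the true $\boldsymbol\beta$ satisfies the null, $a_{ii}=0$; $d_i=\sum_{j\ne i}a_{ij}$; $\ell(\boldsymbol\beta)=\sum_i\beta_id_i-\sum_{i<j}\log(1+e^{\beta_i+\beta_j})$. $\widehat{\boldsymbol\beta}=\arg\max_{\mathbb R^n}\ell$, $\widehat{\boldsymbol\beta}^0=\arg\max\{\ell(\boldsymbol\beta):(\beta_1,\dots,\beta_r)=(\beta_1^0,\dots,\beta_r^0)\}$. $b_n=\max_{i\neq j}(1+e^{\beta_i+\beta_j})^2/e^{\beta_i+\beta_j}$, $c_n=\min_{i\ne j}(\cdot)$. $x\lesssim y$ means $x\le Cy$ for a constant $C$ independent of $n$. *)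

theory Defs
  imports "HOL-Probability.Probability" "HOL-Library.Landau_Symbols"
begin

text \<open>Beta-model on vertices 0,...,n-1.  A graph is encoded by the indicator of
  its edge set on ordered pairs (i,j) with i < j; a parameter vector in R^n is a
  function nat => real of which only the entries i < n matter.\<close>

definition edge_prob :: "real \<Rightarrow> real" where
  "edge_prob x = exp x / (1 + exp x)"

definition beta_model :: "nat \<Rightarrow> (nat \<Rightarrow> real) \<Rightarrow> (nat \<times> nat \<Rightarrow> bool) pmf" where
  "beta_model n \<beta> = Pi_pmf {(i, j). i < j \<and> j < n} False
      (\<lambda>(i, j). bernoulli_pmf (edge_prob (\<beta> i + \<beta> j)))"

definition adj :: "(nat \<times> nat \<Rightarrow> bool) \<Rightarrow> nat \<Rightarrow> nat \<Rightarrow> real" where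
  "adj G i j = (if i \<noteq> j \<and> G (min i j, max i j) then 1 else 0)"

definition degree :: "nat \<Rightarrow> (nat \<times> nat \<Rightarrow> bool) \<Rightarrow> nat \<Rightarrow> real" where
  "degree n G i = (\<Sum>j\<in>{..<n} - {i}. adj G i j)"

definition loglik :: "nat \<Rightarrow> (nat \<times> nat \<Rightarrow> bool) \<Rightarrow> (nat \<Rightarrow> real) \<Rightarrow> real" where
  "loglik n G \<beta> = (\<Sum>i<n. \<beta> i * degree n G i)
      - (\<Sum>(i, j)\<in>{(i, j). i < j \<and> j < n}. ln (1 + exp (\<beta> i + \<beta> j)))"

definition is_mle :: "nat \<Rightarrow> (nat \<times> nat \<Rightarrow> bool) \<Rightarrow> (nat \<Rightarrow> real) \<Rightarrow> bool" where
  "is_mle n G b \<longleftrightarrow> (\<forall>\<beta>. loglik n G \<beta> \<le> loglik n G b)"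

definition is_restricted_mle ::
    "nat \<Rightarrow> nat \<Rightarrow> (nat \<Rightarrow> real) \<Rightarrow> (nat \<times> nat \<Rightarrow> bool) \<Rightarrow> (nat \<Rightarrow> real) \<Rightarrow> bool" where
  "is_restricted_mle n r \<beta>0 G b \<longleftrightarrow>
     (\<forall>i<r. b i = \<beta>0 i) \<and>
     (\<forall>\<beta>. (\<forall>i<r. \<beta> i = \<beta>0 i) \<longrightarrow> loglik n G \<beta> \<le> loglik n G b)"

definition bn :: "nat \<Rightarrow> (nat \<Rightarrow> real) \<Rightarrow> real" where
  "bn n \<beta> = Max {(1 + exp (\<beta> i + \<beta> j))^2 / exp (\<beta> i + \<beta> j) | i j. i < n \<and> j < n \<and> i \<noteq> j}"

definition cn :: "nat \<Rightarrow> (nat \<Rightarrow> real) \<Rightarrow> real" where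
  "cn n \<beta> = Min {(1 + exp (\<beta> i + \<beta> j))^2 / exp (\<beta> i + \<beta> j) | i j. i < n \<and> j < n \<and> i \<noteq> j}"

end

theory Submission
  imports Defs "HOL-Analysis.Analysis"
begin

lemma Pn_Suc: "{(i, j). i < j \<and> j < Suc n} = {(i, j). i < j \<and> j < n} \<union> (\<lambda>i. (i, n)) ` {..<n}"
  by auto

lemma finite_Pn: "finite {(i, j). i < j \<and> j < (n::nat)}"
  by (rule finite_subset[of _ "{..<n} \<times> {..<n}"]) auto

lemma pair_sum:
  fixes S :: "nat \<Rightarrow> nat \<Rightarrow> real"
  assumes sym: "\<And>i j. S i j = S j i"
  shows "(\<Sum>(i, j)\<in>{(i, j). i < j \<and> j < n}. (v i + v j) * S i j)
         = (\<Sum>i<n. v i * (\<Sum>j\<in>{..<n} - {i}. S i j))"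
proof (induction n)
  case 0 then show ?case by simp
next
  case (Suc n)
  have disj: "{(i, j). i < j \<and> j < n} \<inter> (\<lambda>i. (i, n)) ` {..<n} = {}" by auto
  have "(\<Sum>(i, j)\<in>{(i, j). i < j \<and> j < Suc n}. (v i + v j) * S i j)
      = (\<Sum>(i, j)\<in>{(i, j). i < j \<and> j < n}. (v i + v j) * S i j)
        + (\<Sum>(i, j)\<in>(\<lambda>i. (i, n)) ` {..<n}. (v i + v j) * S i j)"
    unfolding Pn_Suc by (rule sum.union_disjoint) (auto intro: finite_Pn)
  also have "(\<Sum>(i, j)\<in>(\<lambda>i. (i, n)) ` {..<n}. (v i + v j) * S i j) = (\<Sum>i<n. (v i + v n) * S i n)"
    by (subst sum.reindex) (auto simp: inj_on_def)
  finally have L: "(\<Sum>(i, j)\<in>{(i, j). i < j \<and> j < Suc n}. (v i + v j) * S i j)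
     = (\<Sum>i<n. v i * (\<Sum>j\<in>{..<n} - {i}. S i j)) + (\<Sum>i<n. (v i + v n) * S i n)"
    using Suc by simp
  have A: "\<And>i. i < n \<Longrightarrow> {..<Suc n} - {i} = insert n ({..<n} - {i})" by auto
  have "(\<Sum>i<Suc n. v i * (\<Sum>j\<in>{..<Suc n} - {i}. S i j))
     = (\<Sum>i<n. v i * (\<Sum>j\<in>{..<Suc n} - {i}. S i j)) + v n * (\<Sum>j\<in>{..<Suc n} - {n}. S n j)"
    by simp
  also have "(\<Sum>i<n. v i * (\<Sum>j\<in>{..<Suc n} - {i}. S i j)) = (\<Sum>i<n. v i * (S i n + (\<Sum>j\<in>{..<n} - {i}. S i j)))"
    by (intro sum.cong refl) (simp add: A)
  also have "{..<Suc n} - {n} = {..<n}" by auto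
  finally show ?case unfolding L
    by (simp add: algebra_simps sum.distrib sum_distrib_left sym)
qed

definition sd :: "real \<Rightarrow> real" where "sd t = exp t / (1 + exp t)^2"

lemma one_exp_nz: "1 + exp (t::real) \<noteq> 0" by (smt (verit) exp_gt_zero)
lemma one_exp_pos: "1 + exp (t::real) > 0" by (smt (verit) exp_gt_zero)

lemma sd_pos: "sd t > 0" unfolding sd_def using one_exp_pos[of t] by (intro divide_pos_pos) auto

lemma DERIV_edge_prob: "(edge_prob has_real_derivative sd t) (at t)"
  unfolding edge_prob_def sd_def using one_exp_nz[of t]
  by (auto intro!: derivative_eq_intros simp: power2_eq_square field_simps)

lemma DERIV_Lf: "((\<lambda>t. ln (1 + exp t)) has_real_derivative edge_prob t) (at t)"
  unfolding edge_prob_def using one_exp_pos[of t]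
  by (auto intro!: derivative_eq_intros simp: field_simps)

lemma edge_prob_mono_strict: "a < b \<Longrightarrow> edge_prob a < edge_prob b"
proof -
  assume "a < b"
  have "\<And>x. a \<le> x \<Longrightarrow> x \<le> b \<Longrightarrow> (edge_prob has_real_derivative sd x) (at x)" using DERIV_edge_prob by simp
  from MVT2[OF \<open>a<b\<close> this] obtain z where "edge_prob b - edge_prob a = (b - a) * sd z" by blast
  moreover have "(b - a) * sd z > 0" using sd_pos[of z] \<open>a<b\<close> by simp
  ultimately show ?thesis by linarith
qed

lemma edge_prob_mono: "a \<le> b \<Longrightarrow> edge_prob a \<le> edge_prob b"
  using edge_prob_mono_strict[of a b] by (cases "a = b") auto

lemma Lf_tangent: "ln (1 + exp b) \<ge> ln (1 + exp a) + edge_prob a * (b - a)"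
proof (cases "a = b")
  case True then show ?thesis by simp
next
  case False
  show ?thesis
  proof (cases "a < b")
    case True
    have "\<And>x. a \<le> x \<Longrightarrow> x \<le> b \<Longrightarrow> ((\<lambda>t. ln (1 + exp t)) has_real_derivative edge_prob x) (at x)" using DERIV_Lf by simp
    from MVT2[OF True this] obtain z where z: "a < z" "z < b" and e: "ln (1 + exp b) - ln (1 + exp a) = (b - a) * edge_prob z" by blast
    have "edge_prob a \<le> edge_prob z" using z by (intro edge_prob_mono) auto
    then have "edge_prob a * (b - a) \<le> (b - a) * edge_prob z" using True by (simp add: mult.commute mult_right_mono)
    then show ?thesis using e by linarith
  next
    case F: False
    then have ba: "b < a" using False by auto
    have "\<And>x. b \<le> x \<Longrightarrow> x \<le> a \<Longrightarrow> ((\<lambda>t. ln (1 + exp t)) has_real_derivative edge_prob x) (at x)" using DERIV_Lf by simp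
    from MVT2[OF ba this] obtain z where z: "b < z" "z < a" and e: "ln (1 + exp a) - ln (1 + exp b) = (a - b) * edge_prob z" by blast
    have "edge_prob z \<le> edge_prob a" using z by (intro edge_prob_mono) auto
    then have "(a - b) * edge_prob z \<le> edge_prob a * (a - b)" using ba by (simp add: mult.commute mult_right_mono)
    then show ?thesis using e by (simp add: algebra_simps)
  qed
qed

definition qf :: "real \<Rightarrow> real" where "qf t = exp (- t) + 2 + exp t"

lemma qf_pos: "qf t > 0" unfolding qf_def by (smt (verit) exp_gt_zero)

lemma qf_eq: "(1 + exp t)^2 / exp t = qf t"
  unfolding qf_def by (simp add: power2_eq_square field_simps exp_minus)

lemma sd_qf: "sd t = 1 / qf t"
  unfolding sd_def qf_eq[symmetric] by simp

lemma qf_ratio: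
  assumes "\<bar>s - t\<bar> \<le> h"
  shows "qf s \<le> exp h * qf t"
proof -
  have a: "exp (- s) \<le> exp h * exp (- t)"
  proof -
    have "exp (- s) = exp (t - s) * exp (- t)" by (simp flip: exp_add)
    also have "\<dots> \<le> exp h * exp (- t)" using assms by (intro mult_right_mono) auto
    finally show ?thesis .
  qed
  have b: "exp s \<le> exp h * exp t"
  proof -
    have "exp s = exp (s - t) * exp t" by (simp flip: exp_add)
    also have "\<dots> \<le> exp h * exp t" using assms by (intro mult_right_mono) auto
    finally show ?thesis .
  qed
  have "1 \<le> exp h" using assms by simp
  then have c: "2 \<le> exp h * 2" by linarith
  show ?thesis using a b c unfolding qf_def distrib_left by linarith
qed

lemma sd_ratio:
  assumes "\<bar>s - t\<bar> \<le> h"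
  shows "exp (- h) * sd t \<le> sd s \<and> sd s \<le> exp h * sd t"
proof -
  have 1: "qf s \<le> exp h * qf t" using qf_ratio assms by blast
  have 2: "qf t \<le> exp h * qf s" using qf_ratio[of t s h] assms by simp
  have "sd s \<le> exp h * sd t"
    unfolding sd_qf using qf_pos[of s] qf_pos[of t] 2 by (simp add: field_simps)
  moreover have "exp (- h) * sd t \<le> sd s"
    unfolding sd_qf using qf_pos[of s] qf_pos[of t] 1 by (simp add: field_simps exp_minus)
  ultimately show ?thesis by simp
qed

lemma edge_prob_diff_bounds:
  assumes "a \<le> a'" and "\<And>s. a \<le> s \<Longrightarrow> s \<le> a' \<Longrightarrow> m \<le> sd s \<and> sd s \<le> M"
  shows "m * (a' - a) \<le> edge_prob a' - edge_prob a \<and> edge_prob a' - edge_prob a \<le> M * (a' - a)"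
proof (cases "a = a'")
  case True then show ?thesis by simp
next
  case False
  then have lt: "a < a'" using assms by auto
  have "\<And>x. a \<le> x \<Longrightarrow> x \<le> a' \<Longrightarrow> (edge_prob has_real_derivative sd x) (at x)" using DERIV_edge_prob by simp
  from MVT2[OF lt this] obtain z where z: "a < z" "z < a'" and e: "edge_prob a' - edge_prob a = (a' - a) * sd z" by blast
  have "m \<le> sd z" "sd z \<le> M" using assms(2)[of z] z by auto
  then show ?thesis using e lt by (auto simp: mult.commute intro: mult_left_mono)
qed

definition gr :: "nat \<Rightarrow> (nat \<times> nat \<Rightarrow> bool) \<Rightarrow> (nat \<Rightarrow> real) \<Rightarrow> nat \<Rightarrow> real" where
  "gr n G x k = (\<Sum>j\<in>{..<n} - {k}. adj G k j - edge_prob (x k + x j))"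

definition Dv :: "nat \<Rightarrow> (nat \<times> nat \<Rightarrow> bool) \<Rightarrow> (nat \<Rightarrow> real) \<Rightarrow> (nat \<Rightarrow> real) \<Rightarrow> real" where
  "Dv n G x v = (\<Sum>k<n. v k * gr n G x k)"

lemma adj_sym: "adj G i j = adj G j i"
  unfolding adj_def by (auto simp: min.commute max.commute)

lemma loglik_pairs:
  "loglik n G x = (\<Sum>(i, j)\<in>{(i, j). i < j \<and> j < n}. (x i + x j) * adj G i j - ln (1 + exp (x i + x j)))"
proof -
  have "(\<Sum>i<n. x i * degree n G i) = (\<Sum>(i, j)\<in>{(i, j). i < j \<and> j < n}. (x i + x j) * adj G i j)"
    unfolding degree_def by (rule pair_sum[symmetric]) (rule adj_sym)
  then show ?thesis unfolding loglik_def
    by (simp add: sum_subtractf case_prod_beta)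
qed

lemma Dv_pairs:
  "Dv n G x v = (\<Sum>(i, j)\<in>{(i, j). i < j \<and> j < n}. (v i + v j) * (adj G i j - edge_prob (x i + x j)))"
  unfolding Dv_def gr_def
  by (rule pair_sum[symmetric]) (simp add: adj_sym add.commute)

lemma tangent:
  "loglik n G y \<le> loglik n G x + Dv n G x (\<lambda>i. y i - x i)"
proof -
  have "loglik n G y - loglik n G x - Dv n G x (\<lambda>i. y i - x i)
     = (\<Sum>(i, j)\<in>{(i, j). i < j \<and> j < n}.
          ((y i + y j) * adj G i j - ln (1 + exp (y i + y j)))
         - ((x i + x j) * adj G i j - ln (1 + exp (x i + x j)))
         - ((y i - x i) + (y j - x j)) * (adj G i j - edge_prob (x i + x j)))"
    unfolding loglik_pairs Dv_pairs by (simp add: sum_subtractf case_prod_beta)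
  also have "\<dots> \<le> (\<Sum>(i, j)\<in>{(i, j). i < j \<and> j < n}. (0::real))"
  proof (rule sum_mono)
    fix p assume "p \<in> {(i, j). i < j \<and> j < n}"
    obtain i j where p: "p = (i, j)" by force
    have "ln (1 + exp (y i + y j)) \<ge> ln (1 + exp (x i + x j)) + edge_prob (x i + x j) * ((y i + y j) - (x i + x j))"
      by (rule Lf_tangent)
    then show "(case p of (i, j) \<Rightarrow>
          ((y i + y j) * adj G i j - ln (1 + exp (y i + y j)))
         - ((x i + x j) * adj G i j - ln (1 + exp (x i + x j)))
         - ((y i - x i) + (y j - x j)) * (adj G i j - edge_prob (x i + x j))) \<le> (case p of (i, j) \<Rightarrow> 0)"
      unfolding p by (simp add: algebra_simps)
  qed
  finally show ?thesis by simp
qed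

lemma loglik_deriv:
  "((\<lambda>t. loglik n G (\<lambda>i. x i + t * v i)) has_real_derivative Dv n G (\<lambda>i. x i + t0 * v i) v) (at t0)"
proof -
  have "((\<lambda>t. \<Sum>(i, j)\<in>{(i, j). i < j \<and> j < n}. (x i + t * v i + (x j + t * v j)) * adj G i j - ln (1 + exp (x i + t * v i + (x j + t * v j))))
     has_real_derivative (\<Sum>(i, j)\<in>{(i, j). i < j \<and> j < n}. (v i + v j) * (adj G i j - edge_prob (x i + t0 * v i + (x j + t0 * v j))))) (at t0)"
    unfolding case_prod_beta
  proof (rule DERIV_sum)
    fix p :: "nat \<times> nat"
    let ?a = "x (fst p) + x (snd p)" and ?b = "v (fst p) + v (snd p)"
    have e: "\<And>t. x (fst p) + t * v (fst p) + (x (snd p) + t * v (snd p)) = ?a + t * ?b"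
      by (simp add: algebra_simps)
    have d1: "((\<lambda>t. ?a + t * ?b) has_real_derivative ?b) (at t0)"
      by (auto intro!: derivative_eq_intros)
    have d2: "((\<lambda>t. ln (1 + exp (?a + t * ?b))) has_real_derivative edge_prob (?a + t0 * ?b) * ?b) (at t0)"
      using DERIV_chain2[OF DERIV_Lf d1] .
    have "((\<lambda>t. (?a + t * ?b) * adj G (fst p) (snd p) - ln (1 + exp (?a + t * ?b)))
        has_real_derivative ?b * adj G (fst p) (snd p) - edge_prob (?a + t0 * ?b) * ?b) (at t0)"
      by (intro DERIV_diff DERIV_cmult_right d1 d2)
    then show "((\<lambda>t. (x (fst p) + t * v (fst p) + (x (snd p) + t * v (snd p))) * adj G (fst p) (snd p) - ln (1 + exp (x (fst p) + t * v (fst p) + (x (snd p) + t * v (snd p)))))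
        has_real_derivative (v (fst p) + v (snd p)) * (adj G (fst p) (snd p) - edge_prob (x (fst p) + t0 * v (fst p) + (x (snd p) + t0 * v (snd p))))) (at t0)"
      unfolding e by (simp add: algebra_simps)
  qed
  then show ?thesis unfolding loglik_pairs Dv_pairs by (simp add: algebra_simps)
qed

lemma local_max_dir:
  assumes "d > 0" and "\<And>t. 0 < t \<Longrightarrow> t < d \<Longrightarrow> loglik n G (\<lambda>i. x i + t * v i) \<le> loglik n G x"
  shows "Dv n G x v \<le> 0"
proof (rule ccontr)
  assume "\<not> Dv n G x v \<le> 0"
  then have pos: "Dv n G (\<lambda>i. x i + 0 * v i) v > 0" by simp
  from DERIV_pos_inc_right[OF loglik_deriv pos]
  obtain e where e: "e > 0" "\<And>h. h > 0 \<Longrightarrow> h < e \<Longrightarrow> loglik n G (\<lambda>i. x i + 0 * v i) < loglik n G (\<lambda>i. x i + (0 + h) * v i)"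
    by blast
  define h where "h = min e d / 2"
  have "h > 0" "h < e" "h < d" using e \<open>d > 0\<close> by (auto simp: h_def)
  then have "loglik n G x < loglik n G (\<lambda>i. x i + h * v i)" using e(2)[of h] by simp
  with assms(2)[OF \<open>h>0\<close> \<open>h<d\<close>] show False by simp
qed

definition win :: "real \<Rightarrow> real \<Rightarrow> real \<Rightarrow> bool" where
  "win m M t \<longleftrightarrow> (\<forall>s. \<bar>s - t\<bar> \<le> 2 \<longrightarrow> m \<le> sd s \<and> sd s \<le> M)"

lemma slope:
  assumes w: "win m M t" and a: "\<bar>a - t\<bar> \<le> 2" and a': "\<bar>a' - t\<bar> \<le> 2"
  shows "\<exists>w. m \<le> w \<and> w \<le> M \<and> edge_prob a' - edge_prob a = w * (a' - a)"
proof -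
  have "\<bar>t - t\<bar> \<le> 2" by simp
  then have "m \<le> sd t \<and> sd t \<le> M" using w unfolding win_def by blast
  then have mM: "m \<le> M" by linarith
  consider "a = a'" | "a < a'" | "a' < a" by linarith
  then show ?thesis
  proof cases
    case 1 then show ?thesis using mM by auto
  next
    case 2
    have "\<And>x. a \<le> x \<Longrightarrow> x \<le> a' \<Longrightarrow> (edge_prob has_real_derivative sd x) (at x)" using DERIV_edge_prob by simp
    from MVT2[OF 2 this] obtain z where z: "a < z" "z < a'" and e: "edge_prob a' - edge_prob a = (a' - a) * sd z" by blast
    have "\<bar>z - t\<bar> \<le> 2" using z a a' by linarith
    then have "m \<le> sd z \<and> sd z \<le> M" using w unfolding win_def by blast
    then show ?thesis using e by (auto simp: mult.commute)
  next
    case 3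
    have "\<And>x. a' \<le> x \<Longrightarrow> x \<le> a \<Longrightarrow> (edge_prob has_real_derivative sd x) (at x)" using DERIV_edge_prob by simp
    from MVT2[OF 3 this] obtain z where z: "a' < z" "z < a" and e: "edge_prob a - edge_prob a' = (a - a') * sd z" by blast
    have "\<bar>z - t\<bar> \<le> 2" using z a a' by linarith
    then have "m \<le> sd z \<and> sd z \<le> M" using w unfolding win_def by blast
    moreover have "edge_prob a' - edge_prob a = sd z * (a' - a)" using e by (simp add: algebra_simps)
    ultimately show ?thesis by blast
  qed
qed

lemma helper_pq:
  fixes m M w p q :: real
  assumes "0 \<le> m" "m \<le> w" "w \<le> M"
  shows "p * (w * (p + q)) \<ge> m * p^2 - M * \<bar>p\<bar> * \<bar>q\<bar>"
proof -
  have 1: "w * p^2 \<ge> m * p^2" using assms by (intro mult_right_mono) auto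
  have "\<bar>w * p * q\<bar> = w * (\<bar>p\<bar> * \<bar>q\<bar>)" using assms by (simp add: abs_mult)
  also have "\<dots> \<le> M * (\<bar>p\<bar> * \<bar>q\<bar>)" using assms by (intro mult_right_mono) auto
  finally have 2: "w * p * q \<ge> - (M * \<bar>p\<bar> * \<bar>q\<bar>)" by (simp add: mult.assoc) 
  have "p * (w * (p + q)) = w * p^2 + w * p * q" by (simp add: algebra_simps power2_eq_square)
  then show ?thesis using 1 2 by linarith
qed

lemma sq_pairs:
  fixes u :: "nat \<Rightarrow> real"
  shows "(\<Sum>(i, j)\<in>{(i, j). i < j \<and> j < n}. (u i + u j)^2) = (real n - 2) * (\<Sum>k<n. (u k)^2) + (\<Sum>k<n. u k)^2"
proof -
  have "(\<Sum>(i, j)\<in>{(i, j). i < j \<and> j < n}. (u i + u j)^2) = (\<Sum>(i, j)\<in>{(i, j). i < j \<and> j < n}. (u i + u j) * (u i + u j))"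
    by (simp add: power2_eq_square)
  also have "\<dots> = (\<Sum>k<n. u k * (\<Sum>j\<in>{..<n} - {k}. u k + u j))"
    by (rule pair_sum) (simp add: add.commute)
  also have "\<dots> = (\<Sum>k<n. u k * ((real n - 2) * u k + (\<Sum>j<n. u j)))"
  proof (rule sum.cong[OF refl])
    fix k assume k: "k \<in> {..<n}"
    have "(\<Sum>j\<in>{..<n} - {k}. u k + u j) = real (n - 1) * u k + ((\<Sum>j<n. u j) - u k)"
      using k by (simp add: sum.distrib sum_diff1)
    also have "\<dots> = (real n - 2) * u k + (\<Sum>j<n. u j)" using k by (simp add: of_nat_diff algebra_simps)
    finally show "u k * (\<Sum>j\<in>{..<n} - {k}. u k + u j) = u k * ((real n - 2) * u k + (\<Sum>j<n. u j))" by simp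
  qed
  also have "\<dots> = (\<Sum>k<n. (real n - 2) * (u k)^2 + u k * (\<Sum>j<n. u j))"
    by (rule sum.cong) (simp_all add: algebra_simps power2_eq_square)
  also have "\<dots> = (real n - 2) * (\<Sum>k<n. (u k)^2) + (\<Sum>k<n. u k) * (\<Sum>j<n. u j)"
    by (simp add: sum.distrib sum_distrib_left sum_distrib_right mult.commute)
  also have "\<dots> = (real n - 2) * (\<Sum>k<n. (u k)^2) + (\<Sum>k<n. u k)^2"
    by (simp add: power2_eq_square)
  finally show ?thesis .
qed

lemma sq_pairs_ge:
  fixes u :: "nat \<Rightarrow> real"
  shows "(\<Sum>(i, j)\<in>{(i, j). i < j \<and> j < n}. (u i + u j)^2) \<ge> (real n - 2) * (\<Sum>k<n. (u k)^2)"
  unfolding sq_pairs by simp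

lemma l1_from_l2:
  fixes u :: "nat \<Rightarrow> real"
  assumes "n \<ge> 3" "m > 0" "A \<ge> 0"
    and "m * (real n - 2) * (\<Sum>k<n. (u k)^2) \<le> A * (\<Sum>k<n. \<bar>u k\<bar>)"
  shows "(\<Sum>k<n. \<bar>u k\<bar>) \<le> real n * A / (m * (real n - 2))"
proof -
  define s where "s = (\<Sum>k<n. \<bar>u k\<bar>)"
  define q where "q = (\<Sum>k<n. (u k)^2)"
  have s0: "s \<ge> 0" unfolding s_def by (simp add: sum_nonneg)
  have cs: "s^2 \<le> q * real n"
    using sum_squared_le_sum_of_squares[of "\<lambda>k. \<bar>u k\<bar>" "{..<n}"] by (simp add: s_def q_def)
  have c: "m * (real n - 2) > 0" using assms by simp
  have mq: "m * (real n - 2) * q \<le> A * s" using assms(4) by (simp add: s_def q_def)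
  show ?thesis
  proof (cases "s = 0")
    case True then show ?thesis using assms by (simp add: s_def[symmetric])
  next
    case False
    then have sp: "s > 0" using s0 by simp
    have "m * (real n - 2) * s^2 \<le> m * (real n - 2) * (q * real n)" using cs c by (intro mult_left_mono) auto
    also have "\<dots> = real n * (m * (real n - 2) * q)" by simp
    also have "\<dots> \<le> real n * (A * s)" using mq by (intro mult_left_mono) auto
    finally have "m * (real n - 2) * s * s \<le> (real n * A) * s" by (simp add: power2_eq_square algebra_simps)
    then have "m * (real n - 2) * s \<le> real n * A" using sp by simp
    then have "s \<le> real n * A / (m * (real n - 2))" using c by (simp add: field_simps)
    then show ?thesis by (simp add: s_def)
  qed
qed

lemma sum_indic_le:
  fixes f :: "nat \<Rightarrow> real"
  assumes "\<And>j. j < n \<Longrightarrow> \<bar>f j\<bar> \<le> (if j < r then c else 0)" "c \<ge> 0"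
  shows "(\<Sum>j<n. \<bar>f j\<bar>) \<le> real r * c"
proof -
  have "(\<Sum>j<n. \<bar>f j\<bar>) \<le> (\<Sum>j<n. (if j < r then c else 0))" using assms by (intro sum_mono) auto
  also have "\<dots> = (\<Sum>j\<in>{..<n} \<inter> {j. j < r}. c)" by (subst sum.inter_restrict) auto
  also have "\<dots> = real (card ({..<n} \<inter> {j. j < r})) * c" by simp
  also have "\<dots> \<le> real r * c"
  proof -
    have "card ({..<n} \<inter> {j. j < r}) \<le> card {..<r}" by (intro card_mono) auto
    then show ?thesis using assms(2) by (intro mult_right_mono) auto
  qed
  finally show ?thesis .
qed

lemma diff_bound:
  fixes x y \<beta> :: "nat \<Rightarrow> real"
  assumes n3: "n \<ge> 3" and m0: "m > 0"
    and W: "\<And>i j. i < n \<Longrightarrow> j < n \<Longrightarrow> i \<noteq> j \<Longrightarrow> win m M (\<beta> i + \<beta> j)"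
    and xb: "\<And>i. i < n \<Longrightarrow> \<bar>x i - \<beta> i\<bar> \<le> 1"
    and yb: "\<And>i. i < n \<Longrightarrow> \<bar>y i - \<beta> i\<bar> \<le> 1"
    and gx: "\<And>k. k < n \<Longrightarrow> gr n G x k = 0"
    and gy: "\<And>k. r \<le> k \<Longrightarrow> k < n \<Longrightarrow> gr n G y k = 0"
    and k: "r \<le> k" "k < n"
  shows "\<bar>x k - y k\<bar> * ((real n - 1) * m) \<le> M * (real n * (2 * real r * M) / (m * (real n - 2)) + 2 * real r)"
proof -
  define D where "D i = x i - y i" for i
  define D1 where "D1 i = (if r \<le> i then D i else 0)" for i
  define D2 where "D2 i = (if r \<le> i then 0 else D i)" for i
  define S where "S i j = edge_prob (x i + x j) - edge_prob (y i + y j)" for i j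
  have Ssym: "S i j = S j i" for i j by (simp add: S_def add.commute)
  have Db: "\<bar>D i\<bar> \<le> 2" if "i < n" for i using xb[OF that] yb[OF that] by (simp add: D_def)
  have mM: "m \<le> M"
  proof -
    have "win m M (\<beta> 0 + \<beta> 1)" using W[of 0 1] n3 by simp
    then show ?thesis unfolding win_def by (metis abs_zero diff_self order.trans zero_le_numeral)
  qed
  have M0: "M > 0" using mM m0 by simp
  have Sw: "\<exists>w. m \<le> w \<and> w \<le> M \<and> S i j = w * (D i + D j)" if "i < n" "j < n" "i \<noteq> j" for i j
  proof -
    have "\<bar>(y i + y j) - (\<beta> i + \<beta> j)\<bar> \<le> 2" "\<bar>(x i + x j) - (\<beta> i + \<beta> j)\<bar> \<le> 2"
      using xb[of i] xb[of j] yb[of i] yb[of j] that by (simp_all add: abs_le_iff)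
    from slope[OF W[OF that] this] obtain w where "m \<le> w" "w \<le> M"
      "edge_prob (x i + x j) - edge_prob (y i + y j) = w * ((x i + x j) - (y i + y j))" by blast
    then show ?thesis by (auto simp: S_def D_def algebra_simps)
  qed
  have rowS: "(\<Sum>j\<in>{..<n} - {i}. S i j) = 0" if "r \<le> i" "i < n" for i
  proof -
    have "(\<Sum>j\<in>{..<n} - {i}. S i j) = gr n G y i - gr n G x i"
      unfolding gr_def S_def by (simp add: sum_subtractf[symmetric] algebra_simps)
    then show ?thesis using gx[of i] gy[of i] that by simp
  qed
  have E0: "(\<Sum>(i, j)\<in>{(i, j). i < j \<and> j < n}. (D1 i + D1 j) * S i j) = 0"
  proof -
    have "(\<Sum>(i, j)\<in>{(i, j). i < j \<and> j < n}. (D1 i + D1 j) * S i j) = (\<Sum>i<n. D1 i * (\<Sum>j\<in>{..<n} - {i}. S i j))"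
      by (rule pair_sum) (rule Ssym)
    also have "\<dots> = 0" by (intro sum.neutral) (auto simp: D1_def rowS)
    finally show ?thesis .
  qed
  have pairLB: "(D1 i + D1 j) * S i j \<ge> m * (D1 i + D1 j)^2 - M * ((\<bar>D1 i\<bar> + \<bar>D1 j\<bar>) * (\<bar>D2 i\<bar> + \<bar>D2 j\<bar>))"
    if ijn: "i < j" "j < n" for i j
  proof -
    have inn: "i < n" using ijn by linarith
    have ij: "i \<noteq> j" using ijn by simp
    obtain w where w: "m \<le> w" "w \<le> M" "S i j = w * (D i + D j)" using Sw[OF inn ijn(2) ij] by blast
    have dd: "D i + D j = (D1 i + D1 j) + (D2 i + D2 j)" by (simp add: D1_def D2_def)
    have "(D1 i + D1 j) * S i j \<ge> m * (D1 i + D1 j)^2 - M * \<bar>D1 i + D1 j\<bar> * \<bar>D2 i + D2 j\<bar>"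
      unfolding w(3) dd using helper_pq[OF less_imp_le[OF m0] w(1,2)] by blast
    moreover have "M * \<bar>D1 i + D1 j\<bar> * \<bar>D2 i + D2 j\<bar> \<le> M * ((\<bar>D1 i\<bar> + \<bar>D1 j\<bar>) * (\<bar>D2 i\<bar> + \<bar>D2 j\<bar>))"
      using M0 by (simp add: mult.assoc mult_mono abs_triangle_ineq)
    ultimately show ?thesis by linarith
  qed
  define s1 where "s1 = (\<Sum>k<n. \<bar>D1 k\<bar>)"
  define q1 where "q1 = (\<Sum>k<n. (D1 k)^2)"
  have err: "(\<Sum>(i, j)\<in>{(i, j). i < j \<and> j < n}. (\<bar>D1 i\<bar> + \<bar>D1 j\<bar>) * (\<bar>D2 i\<bar> + \<bar>D2 j\<bar>)) \<le> 2 * real r * s1"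
  proof -
    have "(\<Sum>(i, j)\<in>{(i, j). i < j \<and> j < n}. (\<bar>D1 i\<bar> + \<bar>D1 j\<bar>) * (\<bar>D2 i\<bar> + \<bar>D2 j\<bar>))
       = (\<Sum>i<n. \<bar>D1 i\<bar> * (\<Sum>j\<in>{..<n} - {i}. \<bar>D2 i\<bar> + \<bar>D2 j\<bar>))"
      by (rule pair_sum) (simp add: add.commute)
    also have "\<dots> \<le> (\<Sum>i<n. \<bar>D1 i\<bar> * (2 * real r))"
    proof (rule sum_mono)
      fix i assume i: "i \<in> {..<n}"
      show "\<bar>D1 i\<bar> * (\<Sum>j\<in>{..<n} - {i}. \<bar>D2 i\<bar> + \<bar>D2 j\<bar>) \<le> \<bar>D1 i\<bar> * (2 * real r)"
      proof (cases "r \<le> i")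
        case False then show ?thesis by (simp add: D1_def)
      next
        case True
        have "(\<Sum>j\<in>{..<n} - {i}. \<bar>D2 i\<bar> + \<bar>D2 j\<bar>) = (\<Sum>j\<in>{..<n} - {i}. \<bar>D2 j\<bar>)"
          using True by (simp add: D2_def)
        also have "\<dots> \<le> (\<Sum>j<n. \<bar>D2 j\<bar>)" by (intro sum_mono2) auto
        also have "\<dots> \<le> real r * 2" using Db by (intro sum_indic_le) (auto simp: D2_def)
        finally show ?thesis by (intro mult_left_mono) auto
      qed
    qed
    also have "\<dots> = 2 * real r * s1" unfolding s1_def sum_distrib_left by (simp add: mult.commute)
    finally show ?thesis .
  qed
  have neg: "(\<Sum>(i, j)\<in>{(i, j). i < j \<and> j < n}. m * (D1 i + D1 j)^2 - M * ((\<bar>D1 i\<bar> + \<bar>D1 j\<bar>) * (\<bar>D2 i\<bar> + \<bar>D2 j\<bar>))) \<le> 0"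
    unfolding E0[symmetric] by (intro sum_mono) (auto intro: pairLB)
  have split: "(\<Sum>(i, j)\<in>{(i, j). i < j \<and> j < n}. m * (D1 i + D1 j)^2 - M * ((\<bar>D1 i\<bar> + \<bar>D1 j\<bar>) * (\<bar>D2 i\<bar> + \<bar>D2 j\<bar>)))
      = m * (\<Sum>(i, j)\<in>{(i, j). i < j \<and> j < n}. (D1 i + D1 j)^2)
        - M * (\<Sum>(i, j)\<in>{(i, j). i < j \<and> j < n}. (\<bar>D1 i\<bar> + \<bar>D1 j\<bar>) * (\<bar>D2 i\<bar> + \<bar>D2 j\<bar>))"
    by (simp add: sum_subtractf sum_distrib_left case_prod_beta)
  have errM: "M * (\<Sum>(i, j)\<in>{(i, j). i < j \<and> j < n}. (\<bar>D1 i\<bar> + \<bar>D1 j\<bar>) * (\<bar>D2 i\<bar> + \<bar>D2 j\<bar>)) \<le> M * (2 * real r * s1)"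
    using err M0 by (intro mult_left_mono) auto
  have "m * (\<Sum>(i, j)\<in>{(i, j). i < j \<and> j < n}. (D1 i + D1 j)^2) \<le> M * (2 * real r * s1)"
    using neg split errM by linarith
  moreover have "m * ((real n - 2) * q1) \<le> m * (\<Sum>(i, j)\<in>{(i, j). i < j \<and> j < n}. (D1 i + D1 j)^2)"
    using sq_pairs_ge[of n D1] m0 by (simp add: q1_def)
  ultimately have "m * (real n - 2) * q1 \<le> (2 * real r * M) * s1" by (simp add: algebra_simps)
  then have s1b: "s1 \<le> real n * (2 * real r * M) / (m * (real n - 2))"
    unfolding s1_def q1_def using l1_from_l2[OF n3 m0, of "2 * real r * M" D1] M0 by simp
  have sumD: "(\<Sum>j\<in>{..<n} - {k}. \<bar>D j\<bar>) \<le> s1 + 2 * real r"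
  proof -
    have "(\<Sum>j\<in>{..<n} - {k}. \<bar>D j\<bar>) \<le> (\<Sum>j<n. \<bar>D j\<bar>)" by (intro sum_mono2) auto
    also have "\<dots> = (\<Sum>j<n. \<bar>D1 j\<bar> + \<bar>D2 j\<bar>)" by (intro sum.cong) (auto simp: D1_def D2_def)
    also have "\<dots> = s1 + (\<Sum>j<n. \<bar>D2 j\<bar>)" by (simp add: s1_def sum.distrib)
    also have "(\<Sum>j<n. \<bar>D2 j\<bar>) \<le> real r * 2" using Db by (intro sum_indic_le) (auto simp: D2_def)
    finally show ?thesis by simp
  qed
  have "0 = D k * (\<Sum>j\<in>{..<n} - {k}. S k j)" using rowS[OF k] by simp
  also have "\<dots> = (\<Sum>j\<in>{..<n} - {k}. D k * S k j)" by (simp add: sum_distrib_left)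
  also have "\<dots> \<ge> (\<Sum>j\<in>{..<n} - {k}. m * (D k)^2 - M * \<bar>D k\<bar> * \<bar>D j\<bar>)"
  proof (rule sum_mono)
    fix j assume j: "j \<in> {..<n} - {k}"
    obtain w where w: "m \<le> w" "w \<le> M" "S k j = w * (D k + D j)" using Sw[of k j] j k by auto
    show "m * (D k)^2 - M * \<bar>D k\<bar> * \<bar>D j\<bar> \<le> D k * S k j"
      unfolding w(3) using helper_pq[OF less_imp_le[OF m0] w(1,2)] by blast
  qed
  finally have "(\<Sum>j\<in>{..<n} - {k}. m * (D k)^2 - M * \<bar>D k\<bar> * \<bar>D j\<bar>) \<le> 0" .
  moreover have "(\<Sum>j\<in>{..<n} - {k}. m * (D k)^2 - M * \<bar>D k\<bar> * \<bar>D j\<bar>)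
      = (real n - 1) * m * (D k)^2 - M * \<bar>D k\<bar> * (\<Sum>j\<in>{..<n} - {k}. \<bar>D j\<bar>)"
    using k by (simp add: sum_subtractf sum_distrib_left of_nat_diff)
  ultimately have "(real n - 1) * m * (D k)^2 \<le> M * \<bar>D k\<bar> * (\<Sum>j\<in>{..<n} - {k}. \<bar>D j\<bar>)" by linarith
  also have "\<dots> \<le> M * \<bar>D k\<bar> * (s1 + 2 * real r)" using sumD M0 by (intro mult_left_mono) auto
  finally have main: "(real n - 1) * m * (D k)^2 \<le> M * \<bar>D k\<bar> * (s1 + 2 * real r)" .
  have "\<bar>D k\<bar> * ((real n - 1) * m) \<le> M * (s1 + 2 * real r)"
  proof (cases "D k = 0")
    case True then show ?thesis using M0 s1_def by (simp add: sum_nonneg)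
  next
    case False
    have "\<bar>D k\<bar> * (\<bar>D k\<bar> * ((real n - 1) * m)) \<le> \<bar>D k\<bar> * (M * (s1 + 2 * real r))"
      using main by (simp add: power2_eq_square abs_mult_self_eq algebra_simps)
    then show ?thesis using False by simp
  qed
  also have "\<dots> \<le> M * (real n * (2 * real r * M) / (m * (real n - 2)) + 2 * real r)"
    using s1b M0 by (intro mult_left_mono) auto
  finally show ?thesis by (simp add: D_def)
qed

lemma Dv_unit:
  assumes "k < n"
  shows "Dv n G x (\<lambda>i. c * (if i = k then 1 else 0)) = c * gr n G x k"
proof -
  have "Dv n G x (\<lambda>i. c * (if i = k then 1 else 0)) = (\<Sum>i<n. if i = k then c * gr n G x k else 0)"
    unfolding Dv_def by (intro sum.cong) auto
  also have "\<dots> = c * gr n G x k" using assms by simp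
  finally show ?thesis .
qed

lemma max_stationary:
  assumes mx: "\<forall>y. (\<forall>i<r'. y i = x i) \<longrightarrow> loglik n G y \<le> loglik n G x"
    and k: "r' \<le> k" "k < n"
  shows "gr n G x k = 0"
proof -
  have "Dv n G x (\<lambda>i. c * (if i = k then 1 else 0)) \<le> 0" for c :: real
  proof (rule local_max_dir[of 1])
    fix t :: real
    show "loglik n G (\<lambda>i. x i + t * (c * (if i = k then 1 else 0))) \<le> loglik n G x"
      using mx k by (intro mx[rule_format]) auto
  qed simp
  from this[of 1] this[of "-1"] show ?thesis using Dv_unit[OF k(2)] by (metis add.inverse_inverse mult_minus_left mult_1 neg_le_0_iff_le order_antisym)
qed

lemma stationary_max:
  assumes g: "\<And>k. r' \<le> k \<Longrightarrow> k < n \<Longrightarrow> gr n G x k = 0"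
    and y: "\<forall>i<r'. y i = x i"
  shows "loglik n G y \<le> loglik n G x"
proof -
  have "Dv n G x (\<lambda>i. y i - x i) = 0"
    unfolding Dv_def using g y by (intro sum.neutral) (metis diff_self lessThan_iff mult_eq_0_iff not_le)
  then show ?thesis using tangent[of n G y x] by simp
qed

lemma uniqueness:
  assumes n3: "n \<ge> 3"
    and gx: "\<And>k. r' \<le> k \<Longrightarrow> k < n \<Longrightarrow> gr n G x k = 0"
    and gy: "\<And>k. r' \<le> k \<Longrightarrow> k < n \<Longrightarrow> gr n G y k = 0"
    and xy: "\<forall>i<r'. x i = y i"
  shows "\<forall>i<n. x i = y i"
proof -
  define v where "v i = y i - x i" for i
  have D0: "Dv n G z v = 0" if "\<And>k. r' \<le> k \<Longrightarrow> k < n \<Longrightarrow> gr n G z k = 0" for z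
    unfolding Dv_def using that xy by (intro sum.neutral) (metis diff_self lessThan_iff mult_eq_0_iff not_le v_def)
  have "Dv n G x v - Dv n G y v = 0" using D0[OF gx] D0[OF gy] by simp
  then have S0: "(\<Sum>(i, j)\<in>{(i, j). i < j \<and> j < n}. (v i + v j) * (edge_prob (y i + y j) - edge_prob (x i + x j))) = 0"
    unfolding Dv_pairs by (simp add: sum_subtractf[symmetric] case_prod_beta algebra_simps)
  have nn: "\<forall>p\<in>{(i, j). i < j \<and> j < n}. 0 \<le> (case p of (i, j) \<Rightarrow> (v i + v j) * (edge_prob (y i + y j) - edge_prob (x i + x j)))"
  proof
    fix p assume "p \<in> {(i, j). i < j \<and> j < n}"
    obtain i j where p: "p = (i, j)" by force
    have "y i + y j - (x i + x j) = v i + v j" by (simp add: v_def)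
    moreover have "0 \<le> (a' - a) * (edge_prob a' - edge_prob a)" for a a'
      using edge_prob_mono[of a a'] edge_prob_mono[of a' a]
      by (cases "a \<le> a'") (auto intro: mult_nonneg_nonneg mult_nonpos_nonpos)
    ultimately show "0 \<le> (case p of (i, j) \<Rightarrow> (v i + v j) * (edge_prob (y i + y j) - edge_prob (x i + x j)))"
      unfolding p by (metis case_prod_conv)
  qed
  have zero: "(v i + v j) = 0" if "i < j" "j < n" for i j
  proof -
    have "(v i + v j) * (edge_prob (y i + y j) - edge_prob (x i + x j)) = 0"
      using S0 nn sum_nonneg_eq_0_iff[OF finite_Pn[of n], where f="\<lambda>p. case p of (i, j) \<Rightarrow> (v i + v j) * (edge_prob (y i + y j) - edge_prob (x i + x j))"] that
      by auto
    moreover have "y i + y j - (x i + x j) = v i + v j" by (simp add: v_def)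
    ultimately show ?thesis
      using edge_prob_mono_strict[of "x i + x j" "y i + y j"] edge_prob_mono_strict[of "y i + y j" "x i + x j"]
      by (metis diff_self eq_iff_diff_eq_0 linorder_neqE_linordered_idom mult_eq_0_iff less_irrefl)
  qed
  have zero': "v i + v j = 0" if "i < n" "j < n" "i \<noteq> j" for i j
    using zero[of i j] zero[of j i] that by (cases "i < j") (auto simp: add.commute)
  show ?thesis
  proof (intro allI impI)
    fix i assume i: "i < n"
    obtain j k where jk: "j < n" "k < n" "i \<noteq> j" "i \<noteq> k" "j \<noteq> k"
    proof -
      consider "i = 0" | "i = 1" | "i \<ge> 2" by linarith
      then show thesis
      proof cases
        case 1 then show thesis using that[of 1 2] n3 by auto
      next
        case 2 then show thesis using that[of 0 2] n3 by auto
      next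
        case 3 then show thesis using that[of 0 1] i by auto
      qed
    qed
    have "v i + v j = 0" "v i + v k = 0" "v j + v k = 0" using zero' jk i by auto
    then have "v i = 0" by linarith
    then show "x i = y i" by (simp add: v_def)
  qed
qed

lemma loglik_cont: "continuous_on UNIV (loglik n G)"
proof -
  have c1: "continuous_on UNIV (\<lambda>x::nat\<Rightarrow>real. x i)" for i by simp
  have "continuous_on UNIV (\<lambda>x::nat\<Rightarrow>real. \<Sum>p\<in>{(i, j). i < j \<and> j < n}.
      (x (fst p) + x (snd p)) * adj G (fst p) (snd p) - ln (1 + exp (x (fst p) + x (snd p))))"
    by (intro continuous_intros c1) (simp add: one_exp_nz)
  moreover have "loglik n G = (\<lambda>x::nat\<Rightarrow>real. \<Sum>p\<in>{(i, j). i < j \<and> j < n}.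
      (x (fst p) + x (snd p)) * adj G (fst p) (snd p) - ln (1 + exp (x (fst p) + x (snd p))))"
    by (rule ext) (simp add: loglik_pairs case_prod_beta)
  ultimately show ?thesis by simp
qed

lemma compact_box:
  fixes S :: "nat \<Rightarrow> real set"
  assumes "\<And>i. compact (S i)"
  shows "compact (PiE UNIV S)"
proof -
  have "compactin (product_topology (\<lambda>i. euclidean) UNIV) (PiE UNIV S)"
    by (subst compactin_PiE) (simp add: assms)
  then show ?thesis by (simp add: euclidean_product_topology)
qed

lemma exists_box:
  fixes \<beta> :: "nat \<Rightarrow> real"
  assumes n3: "n \<ge> 3" and m0: "m > 0"
    and W: "\<And>i j. i < n \<Longrightarrow> j < n \<Longrightarrow> i \<noteq> j \<Longrightarrow> win m M (\<beta> i + \<beta> j)"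
    and eps: "\<And>k. k < n \<Longrightarrow> \<bar>gr n G \<beta> k\<bar> \<le> \<epsilon>"
    and c1: "2 * \<epsilon> < m * (real n - 1)"
    and c2: "real n * \<epsilon> / (m * (real n - 2)) \<le> (real n - 1) / 2"
  shows "\<exists>x. (\<forall>i<r'. x i = \<beta> i) \<and> (\<forall>i<n. \<bar>x i - \<beta> i\<bar> \<le> 1) \<and> (\<forall>k. r' \<le> k \<longrightarrow> k < n \<longrightarrow> gr n G x k = 0)"
proof -
  define S where "S i = (if r' \<le> i \<and> i < n then cball (\<beta> i) 1 else {\<beta> i})" for i
  define Q where "Q = PiE UNIV S"
  have inQ: "z \<in> Q \<longleftrightarrow> (\<forall>i. z i \<in> S i)" for z by (simp add: Q_def PiE_iff)
  have inQ': "z \<in> Q \<longleftrightarrow> (\<forall>i. if r' \<le> i \<and> i < n then \<bar>z i - \<beta> i\<bar> \<le> 1 else z i = \<beta> i)" for z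
    unfolding inQ S_def by (intro iff_allI) (auto simp: dist_real_def abs_minus_commute)
  have "compact Q" unfolding Q_def by (intro compact_box) (simp add: S_def)
  moreover have "\<beta> \<in> Q" unfolding inQ' by simp
  ultimately obtain x where xQ: "x \<in> Q" and xmax: "\<And>z. z \<in> Q \<Longrightarrow> loglik n G z \<le> loglik n G x"
    using continuous_attains_sup[of Q "loglik n G"] continuous_on_subset[OF loglik_cont] by blast
  define u where "u i = x i - \<beta> i" for i
  have ub: "\<bar>u i\<bar> \<le> 1" if "i < n" for i using xQ that unfolding inQ' u_def by (metis abs_zero diff_self order_refl zero_le_one)
  have ufix: "u i = 0" if "\<not> (r' \<le> i \<and> i < n)" for i using xQ that unfolding inQ' u_def by auto
  have mwin: "\<exists>w. m \<le> w \<and> edge_prob (x i + x j) - edge_prob (\<beta> i + \<beta> j) = w * (u i + u j)"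
    if "i < n" "j < n" "i \<noteq> j" for i j
  proof -
    have "\<bar>(\<beta> i + \<beta> j) - (\<beta> i + \<beta> j)\<bar> \<le> 2" "\<bar>(x i + x j) - (\<beta> i + \<beta> j)\<bar> \<le> 2"
      using ub[of i] ub[of j] that by (simp_all add: u_def abs_le_iff)
    from slope[OF W[OF that] this] show ?thesis by (auto simp: u_def algebra_simps)
  qed
  define s where "s = (\<Sum>k<n. \<bar>u k\<bar>)"
  have A: "Dv n G x (\<lambda>i. 1 * (\<beta> i - x i)) \<le> 0"
  proof (rule local_max_dir[of 1])
    fix t :: real assume t: "0 < t" "t < 1"
    show "loglik n G (\<lambda>i. x i + t * (1 * (\<beta> i - x i))) \<le> loglik n G x"
    proof (rule xmax)
      show "(\<lambda>i. x i + t * (1 * (\<beta> i - x i))) \<in> Q"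
        unfolding inQ'
      proof
        fix i
        have "x i + t * (1 * (\<beta> i - x i)) - \<beta> i = (1 - t) * u i"
          by (simp add: u_def algebra_simps)
        then have "\<bar>x i + t * (1 * (\<beta> i - x i)) - \<beta> i\<bar> = (1 - t) * \<bar>u i\<bar>"
          using t by (simp add: abs_mult)
        then show "if r' \<le> i \<and> i < n then \<bar>x i + t * (1 * (\<beta> i - x i)) - \<beta> i\<bar> \<le> 1 else x i + t * (1 * (\<beta> i - x i)) = \<beta> i"
          using ub[of i] ufix[of i] t by (auto simp: u_def mult_le_one)
      qed
    qed
  qed simp
  have Dneg: "Dv n G x (\<lambda>i. 1 * (\<beta> i - x i)) = - Dv n G x u"
    unfolding Dv_def u_def by (simp add: sum_negf[symmetric] algebra_simps)
  have key: "(\<Sum>(i, j)\<in>{(i, j). i < j \<and> j < n}. (u i + u j) * (edge_prob (x i + x j) - edge_prob (\<beta> i + \<beta> j)))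
      = Dv n G \<beta> u - Dv n G x u"
    unfolding Dv_pairs by (simp add: sum_subtractf[symmetric] case_prod_beta algebra_simps)
  have Dbeta: "Dv n G \<beta> u \<le> \<epsilon> * s"
  proof -
    have "Dv n G \<beta> u \<le> (\<Sum>k<n. \<bar>u k\<bar> * \<epsilon>)" unfolding Dv_def
    proof (rule sum_mono)
      fix k assume "k \<in> {..<n}"
      then have "\<bar>gr n G \<beta> k\<bar> \<le> \<epsilon>" using eps by auto
      then have "\<bar>u k * gr n G \<beta> k\<bar> \<le> \<bar>u k\<bar> * \<epsilon>" by (simp add: abs_mult mult_left_mono)
      then show "u k * gr n G \<beta> k \<le> \<bar>u k\<bar> * \<epsilon>" by linarith
    qed
    also have "\<dots> = \<epsilon> * s" unfolding s_def sum_distrib_left by (simp add: mult.commute)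
    finally show ?thesis .
  qed
  have lb: "(\<Sum>(i, j)\<in>{(i, j). i < j \<and> j < n}. m * (u i + u j)^2)
     \<le> (\<Sum>(i, j)\<in>{(i, j). i < j \<and> j < n}. (u i + u j) * (edge_prob (x i + x j) - edge_prob (\<beta> i + \<beta> j)))"
  proof (rule sum_mono)
    fix p assume p: "p \<in> {(i, j). i < j \<and> j < n}"
    obtain i j where pij: "p = (i, j)" by force
    have "i < n" "j < n" "i \<noteq> j" using p pij by auto
    then obtain w where w: "m \<le> w" "edge_prob (x i + x j) - edge_prob (\<beta> i + \<beta> j) = w * (u i + u j)"
      using mwin by blast
    have "m * (u i + u j)^2 \<le> w * (u i + u j)^2" using w by (intro mult_right_mono) auto
    then show "(case p of (i, j) \<Rightarrow> m * (u i + u j)^2) \<le> (case p of (i, j) \<Rightarrow> (u i + u j) * (edge_prob (x i + x j) - edge_prob (\<beta> i + \<beta> j)))"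
      unfolding pij using w by (simp add: power2_eq_square algebra_simps)
  qed
  have "m * ((real n - 2) * (\<Sum>k<n. (u k)^2)) \<le> m * (\<Sum>(i, j)\<in>{(i, j). i < j \<and> j < n}. (u i + u j)^2)"
    using sq_pairs_ge[of n u] m0 by (intro mult_left_mono) auto
  also have "\<dots> = (\<Sum>(i, j)\<in>{(i, j). i < j \<and> j < n}. m * (u i + u j)^2)"
    by (simp add: sum_distrib_left case_prod_beta)
  also have "\<dots> \<le> \<epsilon> * s" using lb key Dbeta A Dneg by linarith
  finally have "m * (real n - 2) * (\<Sum>k<n. (u k)^2) \<le> \<epsilon> * (\<Sum>k<n. \<bar>u k\<bar>)" by (simp add: s_def mult.assoc)
  moreover have e0: "\<epsilon> \<ge> 0" using eps[of 0] n3 by auto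
  ultimately have "s \<le> real n * \<epsilon> / (m * (real n - 2))" unfolding s_def by (intro l1_from_l2[OF n3 m0]) auto
  with c2 have sb: "s \<le> (real n - 1) / 2" by linarith
  have interior: "\<bar>u k\<bar> < 1" if k: "r' \<le> k" "k < n" for k
  proof (rule ccontr)
    assume "\<not> \<bar>u k\<bar> < 1"
    then have "\<bar>u k\<bar> = 1" using ub[OF k(2)] by linarith
    define sg where "sg = u k"
    have sg: "sg = 1 \<or> sg = -1" using \<open>\<bar>u k\<bar> = 1\<close> by (auto simp: sg_def abs_if split: if_splits)
    have sg2: "sg * sg = 1" using sg by auto
    have "Dv n G x (\<lambda>i. (- sg) * (if i = k then 1 else 0)) \<le> 0"
    proof (rule local_max_dir[of 1])
      fix t :: real assume t: "0 < t" "t < 1"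
      show "loglik n G (\<lambda>i. x i + t * (- sg * (if i = k then 1 else 0))) \<le> loglik n G x"
      proof (rule xmax)
        show "(\<lambda>i. x i + t * (- sg * (if i = k then 1 else 0))) \<in> Q"
          unfolding inQ'
        proof
          fix i
          show "if r' \<le> i \<and> i < n then \<bar>x i + t * (- sg * (if i = k then 1 else 0)) - \<beta> i\<bar> \<le> 1
                else x i + t * (- sg * (if i = k then 1 else 0)) = \<beta> i"
          proof (cases "i = k")
            case True
            have "x k + t * (- sg) - \<beta> k = sg * (1 - t)" by (simp add: u_def sg_def algebra_simps)
            moreover have "\<bar>sg * (1 - t)\<bar> \<le> 1" using sg t by auto
            ultimately show ?thesis using True k by simp
          next
            case False
            then show ?thesis using ub[of i] ufix[of i] by (auto simp: u_def)
          qed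
        qed
      qed
    qed simp
    then have g1: "sg * gr n G x k \<ge> 0" using Dv_unit[OF k(2), of G x "- sg"] by simp
    have grx: "gr n G x k = gr n G \<beta> k - (\<Sum>j\<in>{..<n} - {k}. edge_prob (x k + x j) - edge_prob (\<beta> k + \<beta> j))"
      unfolding gr_def by (simp add: sum_subtractf[symmetric] algebra_simps)
    have rowlb: "(\<Sum>j\<in>{..<n} - {k}. m * (1 + sg * u j)) \<le> (\<Sum>j\<in>{..<n} - {k}. sg * (edge_prob (x k + x j) - edge_prob (\<beta> k + \<beta> j)))"
    proof (rule sum_mono)
      fix j assume j: "j \<in> {..<n} - {k}"
      then obtain w where w: "m \<le> w" "edge_prob (x k + x j) - edge_prob (\<beta> k + \<beta> j) = w * (u k + u j)"
        using mwin[of k j] k by auto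
      have e: "sg * (w * (u k + u j)) = w * (1 + sg * u j)" using sg2 by (simp add: sg_def algebra_simps)
      have nn: "1 + sg * u j \<ge> 0" using sg ub[of j] j by (auto simp: abs_le_iff)
      have mono: "m * (1 + sg * u j) \<le> w * (1 + sg * u j)" using w(1) nn by (intro mult_right_mono)
      show "m * (1 + sg * u j) \<le> sg * (edge_prob (x k + x j) - edge_prob (\<beta> k + \<beta> j))"
        unfolding w(2) e by (rule mono)
    qed
    have sumu: "(\<Sum>j\<in>{..<n} - {k}. sg * u j) \<ge> - s"
    proof -
      have "(\<Sum>j\<in>{..<n} - {k}. - (sg * u j)) \<le> (\<Sum>j\<in>{..<n} - {k}. \<bar>u j\<bar>)"
        using sg by (intro sum_mono) auto
      also have "\<dots> \<le> s" unfolding s_def by (intro sum_mono2) auto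
      finally show ?thesis by (simp add: sum_negf)
    qed
    have "(\<Sum>j\<in>{..<n} - {k}. m * (1 + sg * u j)) = m * ((real n - 1) + (\<Sum>j\<in>{..<n} - {k}. sg * u j))"
      using k by (simp add: sum.distrib sum_distrib_left[symmetric] of_nat_diff)
    also have "\<dots> \<ge> m * ((real n - 1) - s)" using sumu m0 by (intro mult_left_mono) auto
    finally have r1: "m * ((real n - 1) - s) \<le> (\<Sum>j\<in>{..<n} - {k}. sg * (edge_prob (x k + x j) - edge_prob (\<beta> k + \<beta> j)))"
      using rowlb by linarith
    have "sg * gr n G x k = sg * gr n G \<beta> k - (\<Sum>j\<in>{..<n} - {k}. sg * (edge_prob (x k + x j) - edge_prob (\<beta> k + \<beta> j)))"
      unfolding grx by (simp add: right_diff_distrib sum_distrib_left)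
    moreover have "sg * gr n G \<beta> k \<le> \<epsilon>" using eps[OF k(2)] sg by (auto simp: abs_le_iff)
    moreover have "m * ((real n - 1) - s) \<ge> m * ((real n - 1) / 2)" using sb m0 by (intro mult_left_mono) auto
    ultimately have "sg * gr n G x k \<le> \<epsilon> - m * ((real n - 1) / 2)" using r1 by linarith
    then show False using g1 c1 by (simp add: field_simps)
  qed
  have stat: "gr n G x k = 0" if k: "r' \<le> k" "k < n" for k
  proof -
    define d where "d = 1 - \<bar>u k\<bar>"
    have d0: "d > 0" using interior[OF k] by (simp add: d_def)
    have "Dv n G x (\<lambda>i. c * (if i = k then 1 else 0)) \<le> 0" if c: "c = 1 \<or> c = -1" for c
    proof (rule local_max_dir[OF d0])
      fix t :: real assume t: "0 < t" "t < d"
      show "loglik n G (\<lambda>i. x i + t * (c * (if i = k then 1 else 0))) \<le> loglik n G x"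
      proof (rule xmax)
        show "(\<lambda>i. x i + t * (c * (if i = k then 1 else 0))) \<in> Q"
          unfolding inQ'
        proof
          fix i
          show "if r' \<le> i \<and> i < n then \<bar>x i + t * (c * (if i = k then 1 else 0)) - \<beta> i\<bar> \<le> 1
                else x i + t * (c * (if i = k then 1 else 0)) = \<beta> i"
          proof (cases "i = k")
            case True
            have "\<bar>x k + t * c - \<beta> k\<bar> \<le> \<bar>u k\<bar> + t" using c t by (auto simp: u_def abs_le_iff)
            then show ?thesis using True k t by (simp add: d_def)
          next
            case False
            then show ?thesis using ub[of i] ufix[of i] by (auto simp: u_def)
          qed
        qed
      qed
    qed
    note dd = this
    have a1: "Dv n G x (\<lambda>i. 1 * (if i = k then 1 else 0)) \<le> 0" by (rule dd) simp
    have a2: "Dv n G x (\<lambda>i. (-1) * (if i = k then 1 else 0)) \<le> 0" by (rule dd) simp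
    have "1 * gr n G x k \<le> 0" using a1 unfolding Dv_unit[OF k(2)] .
    moreover have "(-1) * gr n G x k \<le> 0" using a2 unfolding Dv_unit[OF k(2)] .
    ultimately show ?thesis by linarith
  qed
  show ?thesis
  proof (intro exI conjI allI impI)
    fix i assume "i < r'" then show "x i = \<beta> i" using ufix[of i] by (simp add: u_def)
  next
    fix i assume "i < n" then show "\<bar>x i - \<beta> i\<bar> \<le> 1" using ub[of i] by (simp add: u_def)
  next
    fix k assume "r' \<le> k" "k < n" then show "gr n G x k = 0" by (rule stat)
  qed
qed

lemma good_event:
  fixes \<beta> :: "nat \<Rightarrow> real"
  assumes n3: "n \<ge> 3" and m0: "m > 0"
    and W: "\<And>i j. i < n \<Longrightarrow> j < n \<Longrightarrow> i \<noteq> j \<Longrightarrow> win m M (\<beta> i + \<beta> j)"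
    and eps: "\<And>k. k < n \<Longrightarrow> \<bar>gr n G \<beta> k\<bar> \<le> \<epsilon>"
    and c1: "2 * \<epsilon> < m * (real n - 1)"
    and c2: "real n * \<epsilon> / (m * (real n - 2)) \<le> (real n - 1) / 2"
  shows "(\<exists>b. is_mle n G b) \<and> (\<exists>b0. is_restricted_mle n r \<beta> G b0) \<and>
         (\<forall>b b0. is_mle n G b \<longrightarrow> is_restricted_mle n r \<beta> G b0 \<longrightarrow>
            (\<forall>i\<in>{r..<n}. \<bar>b i - b0 i\<bar> * ((real n - 1) * m) \<le> M * (real n * (2 * real r * M) / (m * (real n - 2)) + 2 * real r)))"
proof -
  obtain x where x: "\<forall>i<n. \<bar>x i - \<beta> i\<bar> \<le> 1" "\<forall>k. 0 \<le> k \<longrightarrow> k < n \<longrightarrow> gr n G x k = 0"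
    using exists_box[OF n3 m0 W eps c1 c2, of "0::nat"] by auto
  obtain x0 where x0: "\<forall>i<r. x0 i = \<beta> i" "\<forall>i<n. \<bar>x0 i - \<beta> i\<bar> \<le> 1" "\<forall>k. r \<le> k \<longrightarrow> k < n \<longrightarrow> gr n G x0 k = 0"
    using exists_box[OF n3 m0 W eps c1 c2, of r] by auto
  have mle_x: "is_mle n G x"
    unfolding is_mle_def using stationary_max[of 0 n G x] x(2) by auto
  have rmle_x0: "is_restricted_mle n r \<beta> G x0"
    unfolding is_restricted_mle_def using stationary_max[of r n G x0] x0 by auto
  have bound: "\<forall>i\<in>{r..<n}. \<bar>b i - b0 i\<bar> * ((real n - 1) * m) \<le> M * (real n * (2 * real r * M) / (m * (real n - 2)) + 2 * real r)"
    if b: "is_mle n G b" and b0: "is_restricted_mle n r \<beta> G b0" for b b0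
  proof -
    have gb: "gr n G b k = 0" if "k < n" for k
      using b that unfolding is_mle_def by (intro max_stationary[of 0]) auto
    have b0fix: "\<forall>i<r. b0 i = \<beta> i" using b0 unfolding is_restricted_mle_def by auto
    have gb0: "gr n G b0 k = 0" if "r \<le> k" "k < n" for k
    proof (rule max_stationary[of r _ _ _ k])
      show "\<forall>y. (\<forall>i<r. y i = b0 i) \<longrightarrow> loglik n G y \<le> loglik n G b0"
        using b0 unfolding is_restricted_mle_def by auto
    qed (use that in auto)
    have ub: "\<forall>i<n. x i = b i" using uniqueness[OF n3, of 0 G x b] x(2) gb by auto
    have ub0: "\<forall>i<n. x0 i = b0 i" using uniqueness[OF n3, of r G x0 b0] x0 gb0 b0fix by auto
    show ?thesis
    proof
      fix k assume k: "k \<in> {r..<n}"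
      show "\<bar>b k - b0 k\<bar> * ((real n - 1) * m) \<le> M * (real n * (2 * real r * M) / (m * (real n - 2)) + 2 * real r)"
      proof (rule diff_bound[OF n3 m0 W])
        show "\<bar>b i - \<beta> i\<bar> \<le> 1" if "i < n" for i using x(1) ub that by force
        show "\<bar>b0 i - \<beta> i\<bar> \<le> 1" if "i < n" for i using x0(2) ub0 that by force
      qed (use gb gb0 k in auto)
    qed
  qed
  show ?thesis using mle_x rmle_x0 bound by blast
qed

lemma edge_prob_01: "0 \<le> edge_prob x" "edge_prob x \<le> 1"
  unfolding edge_prob_def using one_exp_pos[of x] by (auto simp: divide_le_eq_1)

lemma expect_edge:
  fixes \<beta> :: "nat \<Rightarrow> real"
  assumes p: "p \<in> {(i, j). i < j \<and> j < n}"
  shows "measure_pmf.expectation (beta_model n \<beta>) (\<lambda>G. if G p then 1 else 0 :: real)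
       = edge_prob (\<beta> (fst p) + \<beta> (snd p))"
proof -
  have "measure_pmf.expectation (beta_model n \<beta>) (\<lambda>G. if G p then 1 else 0 :: real)
      = measure_pmf.expectation (map_pmf (\<lambda>G. G p) (beta_model n \<beta>)) (\<lambda>b. if b then 1 else 0 :: real)"
    by simp
  also have "map_pmf (\<lambda>G. G p) (beta_model n \<beta>) = bernoulli_pmf (edge_prob (\<beta> (fst p) + \<beta> (snd p)))"
    unfolding beta_model_def using p by (subst Pi_pmf_component) (auto simp: finite_Pn case_prod_beta)
  also have "measure_pmf.expectation (bernoulli_pmf (edge_prob (\<beta> (fst p) + \<beta> (snd p)))) (\<lambda>b. if b then 1 else 0 :: real)
      = edge_prob (\<beta> (fst p) + \<beta> (snd p))"
    using edge_prob_01 by simp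
  finally show ?thesis .
qed

lemma gr_as_pairs:
  fixes \<beta> :: "nat \<Rightarrow> real"
  assumes k: "k < n"
  defines "I \<equiv> (\<lambda>j. (min k j, max k j)) ` ({..<n} - {k})"
  shows "gr n G \<beta> k = (\<Sum>p\<in>I. (if G p then 1 else 0) - edge_prob (\<beta> (fst p) + \<beta> (snd p)))"
    and "I \<subseteq> {(i, j). i < j \<and> j < n}" and "card I = n - 1" and "finite I"
proof -
  have inj: "inj_on (\<lambda>j. (min k j, max k j)) ({..<n} - {k})"
    by (rule inj_onI) (auto simp: min_def max_def split: if_splits)
  show "gr n G \<beta> k = (\<Sum>p\<in>I. (if G p then 1 else 0) - edge_prob (\<beta> (fst p) + \<beta> (snd p)))"
    unfolding I_def gr_def sum.reindex[OF inj]
    by (intro sum.cong refl) (auto simp: adj_def min_def max_def add.commute)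
  show "I \<subseteq> {(i, j). i < j \<and> j < n}" unfolding I_def using k by (auto simp: min_def max_def)
  show "card I = n - 1" unfolding I_def using card_image[OF inj] k by simp
  show "finite I" unfolding I_def by simp
qed

lemma hoeff_vertex:
  fixes \<beta> :: "nat \<Rightarrow> real"
  assumes k: "k < n" and n2: "n \<ge> 2" and t: "t \<ge> 0"
  shows "measure_pmf.prob (beta_model n \<beta>) {G. \<bar>gr n G \<beta> k\<bar> \<ge> t} \<le> 2 * exp (- 2 * t^2 / (real n - 1))"
proof -
  define I where "I = (\<lambda>j. (min k j, max k j)) ` ({..<n} - {k})"
  note gp = gr_as_pairs[OF k, folded I_def]
  define P where "P = measure_pmf (beta_model n \<beta>)"
  define X where "X p G = (if G p then 1 else 0 :: real)" for p and G :: "nat \<times> nat \<Rightarrow> bool"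
  define \<mu> where "\<mu> = (\<Sum>p\<in>I. measure_pmf.expectation (beta_model n \<beta>) (X p))"
  have ind0: "prob_space.indep_vars P (\<lambda>_. count_space UNIV) (\<lambda>x f. f x) {(i, j). i < j \<and> j < n}"
    unfolding P_def beta_model_def by (rule indep_vars_Pi_pmf[OF finite_Pn])
  have ind1: "prob_space.indep_vars P (\<lambda>_. count_space UNIV) (\<lambda>x f. f x) I"
    using prob_space.indep_vars_subset[OF _ ind0 gp(2)] by (simp add: P_def measure_pmf.prob_space_axioms)
  have ind: "prob_space.indep_vars P (\<lambda>_. borel) X I"
    using prob_space.indep_vars_compose2[OF _ ind1, of "\<lambda>_ b. if b then 1 else 0 :: real" "\<lambda>_. borel"]
    by (simp add: P_def measure_pmf.prob_space_axioms X_def[abs_def])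
  have Pps: "prob_space P" by (simp add: P_def measure_pmf.prob_space_axioms)
  interpret H: Hoeffding_ineq P I X "\<lambda>_. 0" "\<lambda>_. 1" \<mu>
  proof (intro Hoeffding_ineq.intro indep_interval_bounded_random_variables.intro indep_interval_bounded_random_variables_axioms.intro Pps)
    show "finite I" by (rule gp(4))
    show "prob_space.indep_vars P (\<lambda>_. borel) X I" by (rule ind)
    show "AE x in P. X i x \<in> {0..1}" if "i \<in> I" for i by (simp add: X_def)
    show "\<mu> \<equiv> \<Sum>i\<in>I. prob_space.expectation P (X i)" by (simp add: \<mu>_def P_def)
  qed
  have mu: "\<mu> = (\<Sum>p\<in>I. edge_prob (\<beta> (fst p) + \<beta> (snd p)))"
    unfolding \<mu>_def X_def using gp(2) by (intro sum.cong refl expect_edge) auto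
  have sq: "(\<Sum>i\<in>I. ((1::real) - 0)^2) = real n - 1" using gp(3) n2 by (simp add: of_nat_diff)
  have "{G. \<bar>gr n G \<beta> k\<bar> \<ge> t} = {x \<in> space P. \<bar>(\<Sum>i\<in>I. X i x) - \<mu>\<bar> \<ge> t}"
    unfolding gp(1) mu X_def by (auto simp: P_def sum_subtractf)
  moreover have "H.prob {x \<in> space P. \<bar>(\<Sum>i\<in>I. X i x) - \<mu>\<bar> \<ge> t} \<le> 2 * exp (- 2 * t^2 / (\<Sum>i\<in>I. ((1::real) - 0)^2))"
    using H.Hoeffding_ineq_abs_ge[OF t] sq n2 by simp
  ultimately show ?thesis unfolding sq by (simp add: P_def)
qed

lemma prob_good:
  fixes \<beta> :: "nat \<Rightarrow> real"
  assumes n3: "n \<ge> 3"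
  shows "measure_pmf.prob (beta_model n \<beta>) {G. \<forall>k<n. \<bar>gr n G \<beta> k\<bar> \<le> sqrt (real n * ln (real n))}
           \<ge> 1 - 2 / real n"
proof -
  define t where "t = sqrt (real n * ln (real n))"
  define P where "P = beta_model n \<beta>"
  have lnpos: "ln (real n) > 0" using n3 by simp
  have t0: "t \<ge> 0" unfolding t_def using lnpos by simp
  have t2: "t^2 = real n * ln (real n)" unfolding t_def using lnpos by simp
  have ex: "exp (- 2 * t^2 / (real n - 1)) \<le> 1 / (real n)^2"
  proof -
    have "- 2 * t^2 / (real n - 1) \<le> - 2 * ln (real n)"
    proof -
      have "real n * ln (real n) \<ge> (real n - 1) * ln (real n)" using lnpos by (intro mult_right_mono) auto
      then have "2 * (real n * ln (real n)) / (real n - 1) \<ge> 2 * ln (real n)" using n3 by (simp add: field_simps)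
      then show ?thesis unfolding t2 by simp
    qed
    then have "exp (- 2 * t^2 / (real n - 1)) \<le> exp (- 2 * ln (real n))" by simp
    also have "exp (- 2 * ln (real n)) = 1 / (real n)^2"
    proof -
      have e: "- 2 * ln (real n) = - (ln (real n) + ln (real n))" by simp
      have "exp (- 2 * ln (real n)) = inverse (exp (ln (real n)) * exp (ln (real n)))"
        unfolding e exp_minus exp_add by (rule refl)
      then show ?thesis using n3 by (simp add: power2_eq_square divide_inverse)
    qed
    finally show ?thesis .
  qed
  have "UNIV - {G. \<forall>k<n. \<bar>gr n G \<beta> k\<bar> \<le> t} \<subseteq> (\<Union>k\<in>{..<n}. {G. \<bar>gr n G \<beta> k\<bar> \<ge> t})"
    by auto
  then have "measure_pmf.prob P (UNIV - {G. \<forall>k<n. \<bar>gr n G \<beta> k\<bar> \<le> t}) \<le> measure_pmf.prob P (\<Union>k\<in>{..<n}. {G. \<bar>gr n G \<beta> k\<bar> \<ge> t})"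
    by (intro measure_pmf.finite_measure_mono) auto
  also have "\<dots> \<le> (\<Sum>k\<in>{..<n}. measure_pmf.prob P {G. \<bar>gr n G \<beta> k\<bar> \<ge> t})"
    by (intro measure_UNION_le) auto
  also have "\<dots> \<le> (\<Sum>k\<in>{..<n}. 2 * exp (- 2 * t^2 / (real n - 1)))"
    unfolding P_def using n3 t0 by (intro sum_mono hoeff_vertex) auto
  also have "\<dots> \<le> (\<Sum>k\<in>{..<n}. 2 * (1 / (real n)^2))"
    using ex by (intro sum_mono) auto
  also have "\<dots> = 2 / real n" using n3 by (simp add: power2_eq_square field_simps)
  finally have bad: "measure_pmf.prob P (UNIV - {G. \<forall>k<n. \<bar>gr n G \<beta> k\<bar> \<le> t}) \<le> 2 / real n" .
  have "measure_pmf.prob P {G. \<forall>k<n. \<bar>gr n G \<beta> k\<bar> \<le> t} = 1 - measure_pmf.prob P (UNIV - {G. \<forall>k<n. \<bar>gr n G \<beta> k\<bar> \<le> t})"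
    using measure_pmf.prob_compl[of "{G. \<forall>k<n. \<bar>gr n G \<beta> k\<bar> \<le> t}" P] by simp
  then show ?thesis using bad unfolding P_def t_def by simp
qed

lemma final_arith:
  fixes B Cc N r X L :: real
  assumes Cc: "Cc \<ge> 2" and B: "B \<ge> Cc" and N: "N \<ge> 4" and r: "r \<ge> 0" and L: "L \<ge> 1" and X: "X \<ge> 0"
    and H: "X * ((N - 1) * (exp (-2) / B)) \<le> (exp 2 / Cc) * (N * (2 * r * (exp 2 / Cc)) / ((exp (-2) / B) * (N - 2)) + 2 * r)"
  shows "X \<le> 12 * r * exp 8 * B^3 * L / (N * Cc)"
proof -
  define m where "m = exp (-2) / B"
  define M where "M = exp 2 / Cc"
  define \<kappa> where "\<kappa> = exp 4 * B / Cc"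
  have B0: "B > 0" and C0: "Cc > 0" using Cc B by auto
  have m0: "m > 0" and M0: "M > 0" using B0 C0 by (auto simp: m_def M_def)
  have kap: "M / m = \<kappa>" unfolding m_def M_def \<kappa>_def using B0 C0
    by (simp add: field_simps flip: exp_add)
  have k1: "\<kappa> \<ge> 1"
  proof -
    have "exp 4 * B \<ge> 1 * Cc" using B C0 by (intro mult_mono) auto
    then show ?thesis unfolding \<kappa>_def using C0 by (simp add: field_simps)
  qed
  have a: "N * (2 * r * M) / (m * (N - 2)) \<le> 4 * r * \<kappa>"
  proof -
    have "N * (2 * r * M) / (m * (N - 2)) = (N / (N - 2)) * (2 * r * (M / m))" using N by (simp add: field_simps)
    also have "\<dots> \<le> 2 * (2 * r * (M / m))"
      using N r m0 M0 by (intro mult_right_mono) (auto simp: field_simps)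
    finally show ?thesis unfolding kap by simp
  qed
  have "X * ((N - 1) * m) \<le> M * (4 * r * \<kappa> + 2 * r)"
    using H a M0 unfolding m_def[symmetric] M_def[symmetric]
    by (smt (verit) mult_left_mono)
  also have "\<dots> \<le> M * (6 * r * \<kappa>)"
  proof -
    have "r * 1 \<le> r * \<kappa>" using k1 r by (intro mult_left_mono) auto
    then show ?thesis using M0 by (intro mult_left_mono) (auto simp: mult.commute)
  qed
  finally have "X * ((N - 1) * m) \<le> M * (6 * r * \<kappa>)" .
  then have "X \<le> M * (6 * r * \<kappa>) / ((N - 1) * m)" using N m0 by (simp add: field_simps)
  also have "\<dots> = 6 * r * \<kappa>^2 / (N - 1)"
  proof -
    have Meq: "M = \<kappa> * m" using kap m0 by (simp add: field_simps)
    show ?thesis unfolding Meq using N m0 by (simp add: field_simps power2_eq_square)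
  qed
  also have "\<dots> \<le> 12 * r * \<kappa>^2 / N"
  proof -
    have p: "0 \<le> r * \<kappa>^2" using r by simp
    have "2 * (r * \<kappa>^2) \<le> N * (r * \<kappa>^2)" using N p by (intro mult_right_mono) auto
    then show ?thesis using N by (simp add: field_simps)
  qed
  also have "\<kappa>^2 = exp 8 * B^2 / Cc^2" unfolding \<kappa>_def
    by (simp add: power2_eq_square field_simps flip: exp_add)
  also have "12 * r * (exp 8 * B^2 / Cc^2) / N \<le> 12 * r * exp 8 * B^3 * L / (N * Cc)"
  proof -
    have "B * Cc * L \<ge> 1 * 1 * 1" using B Cc L by (intro mult_mono) auto
    then have "B^2 / Cc^2 \<le> B^3 * L / Cc" using B0 C0 by (simp add: field_simps power2_eq_square power3_eq_cube)
    then have "12 * r * exp 8 * (B^2 / Cc^2) \<le> 12 * r * exp 8 * (B^3 * L / Cc)" using r by (intro mult_left_mono) auto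
    then have "(12 * r * exp 8 * (B^2 / Cc^2)) / N \<le> (12 * r * exp 8 * (B^3 * L / Cc)) / N"
      using N by (intro divide_right_mono) auto
    moreover have "12 * r * (exp 8 * B^2 / Cc^2) / N = (12 * r * exp 8 * (B^2 / Cc^2)) / N" by simp
    moreover have "12 * r * exp 8 * B^3 * L / (N * Cc) = (12 * r * exp 8 * (B^3 * L / Cc)) / N"
      using N C0 by (simp add: field_simps)
    ultimately show ?thesis by simp
  qed
  finally show ?thesis .
qed

lemma Sset_finite: "finite {f i j | i j. i < (n::nat) \<and> j < n \<and> i \<noteq> j}"
proof -
  have "{f i j | i j. i < n \<and> j < n \<and> i \<noteq> j} \<subseteq> (\<lambda>(i, j). f i j) ` ({..<n} \<times> {..<n})" by auto
  moreover have "finite ((\<lambda>(i, j). f i j) ` ({..<n} \<times> {..<n}))" by (intro finite_imageI) auto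
  ultimately show ?thesis by (rule finite_subset)
qed

lemma bn_cn_facts:
  fixes \<beta> :: "nat \<Rightarrow> real"
  assumes n2: "n \<ge> 2"
  shows "\<And>i j. i < n \<Longrightarrow> j < n \<Longrightarrow> i \<noteq> j \<Longrightarrow> cn n \<beta> \<le> qf (\<beta> i + \<beta> j) \<and> qf (\<beta> i + \<beta> j) \<le> bn n \<beta>"
    and "cn n \<beta> \<ge> 2" and "cn n \<beta> \<le> bn n \<beta>"
proof -
  define S where "S = {(1 + exp (\<beta> i + \<beta> j))^2 / exp (\<beta> i + \<beta> j) | i j. i < n \<and> j < n \<and> i \<noteq> j}"
  have S': "S = {qf (\<beta> i + \<beta> j) | i j. i < n \<and> j < n \<and> i \<noteq> j}" unfolding S_def qf_eq by simp
  have fin: "finite S" unfolding S' by (rule Sset_finite)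
  have mem: "qf (\<beta> i + \<beta> j) \<in> S" if "i < n" "j < n" "i \<noteq> j" for i j unfolding S' using that by blast
  have ne: "S \<noteq> {}" using mem[of 0 1] n2 by auto
  have bn: "bn n \<beta> = Max S" and cn: "cn n \<beta> = Min S" unfolding bn_def cn_def S_def by simp_all
  show "\<And>i j. i < n \<Longrightarrow> j < n \<Longrightarrow> i \<noteq> j \<Longrightarrow> cn n \<beta> \<le> qf (\<beta> i + \<beta> j) \<and> qf (\<beta> i + \<beta> j) \<le> bn n \<beta>"
    unfolding bn cn using fin mem by auto
  have "Min S \<in> S" using fin ne by (rule Min_in)
  then obtain i j where "Min S = qf (\<beta> i + \<beta> j)" unfolding S' by blast
  moreover have "qf t \<ge> 2" for t unfolding qf_def by (smt (verit) exp_gt_zero)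
  ultimately show "cn n \<beta> \<ge> 2" unfolding cn by simp
  show "cn n \<beta> \<le> bn n \<beta>" unfolding bn cn using fin ne by (meson Max_in Min_le order_trans Max_ge)
qed

lemma window:
  fixes \<beta> :: "nat \<Rightarrow> real"
  assumes n2: "n \<ge> 2" and ij: "i < n" "j < n" "i \<noteq> j"
  shows "win (exp (-2) / bn n \<beta>) (exp 2 / cn n \<beta>) (\<beta> i + \<beta> j)"
  unfolding win_def
proof (intro allI impI)
  fix s assume s: "\<bar>s - (\<beta> i + \<beta> j)\<bar> \<le> 2"
  note f = bn_cn_facts[OF n2]
  have q: "cn n \<beta> \<le> qf (\<beta> i + \<beta> j)" "qf (\<beta> i + \<beta> j) \<le> bn n \<beta>" using f(1)[OF ij] by auto
  have qp: "qf (\<beta> i + \<beta> j) > 0" by (rule qf_pos)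
  have c0: "cn n \<beta> > 0" using f(2)[of \<beta>] by simp
  have r: "exp (- 2) * sd (\<beta> i + \<beta> j) \<le> sd s \<and> sd s \<le> exp 2 * sd (\<beta> i + \<beta> j)" using sd_ratio[OF s] .
  have "1 / bn n \<beta> \<le> sd (\<beta> i + \<beta> j)" unfolding sd_qf using q qp by (intro divide_left_mono) auto
  then have "exp (-2) / bn n \<beta> \<le> exp (-2) * sd (\<beta> i + \<beta> j)"
    by (metis divide_inverse exp_gt_zero mult_le_cancel_left_pos mult_1_right inverse_eq_divide)
  moreover have "sd (\<beta> i + \<beta> j) \<le> 1 / cn n \<beta>" unfolding sd_qf using q qp c0 by (intro divide_left_mono) auto
  then have "exp 2 * sd (\<beta> i + \<beta> j) \<le> exp 2 / cn n \<beta>"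
    by (metis divide_inverse exp_gt_zero mult_le_cancel_left_pos mult_1_right inverse_eq_divide)
  ultimately show "exp (-2) / bn n \<beta> \<le> sd s \<and> sd s \<le> exp 2 / cn n \<beta>" using r by linarith
qed

theorem lemma12:
  fixes \<beta> :: "nat \<Rightarrow> nat \<Rightarrow> real" and r :: nat
  assumes "r \<ge> 1"
    and "(\<lambda>n. bn n (\<beta> n) ^ 3 / cn n (\<beta> n)) \<in> o(\<lambda>n. real n / ln (real n))"
  shows "\<exists>C K. C > 0 \<and> K > 0 \<and> (\<forall>\<^sub>F n in sequentially.
           measure_pmf.prob (beta_model n (\<beta> n))
             {G. (\<exists>b. is_mle n G b) \<and> (\<exists>b0. is_restricted_mle n r (\<beta> n) G b0) \<and>
                 (\<forall>b b0. is_mle n G b \<longrightarrow> is_restricted_mle n r (\<beta> n) G b0 \<longrightarrow>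
                    (\<forall>i\<in>{r..<n}. \<bar>b i - b0 i\<bar>
                        \<le> C * bn n (\<beta> n) ^ 3 * ln (real n) / (real n * cn n (\<beta> n))))}
           \<ge> 1 - K / real n)"
proof -
  define \<delta> :: real where "\<delta> = 1 / (64 * exp 4)"
  have \<delta>0: "\<delta> > 0" by (simp add: \<delta>_def)
  have ev1: "eventually (\<lambda>n. \<bar>bn n (\<beta> n) ^ 3 / cn n (\<beta> n)\<bar> \<le> \<delta> * \<bar>real n / ln (real n)\<bar>) sequentially"
    using landau_o.smallD[OF assms(2) \<delta>0] by simp
  have ev2: "eventually (\<lambda>n. n \<ge> (4::nat)) sequentially" by (rule eventually_ge_at_top)
  define C where "C = 12 * real r * exp 8"
  have C0: "C > 0" using assms(1) by (simp add: C_def)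
  have main: "measure_pmf.prob (beta_model n (\<beta> n))
             {G. (\<exists>b. is_mle n G b) \<and> (\<exists>b0. is_restricted_mle n r (\<beta> n) G b0) \<and>
                 (\<forall>b b0. is_mle n G b \<longrightarrow> is_restricted_mle n r (\<beta> n) G b0 \<longrightarrow>
                    (\<forall>i\<in>{r..<n}. \<bar>b i - b0 i\<bar>
                        \<le> C * bn n (\<beta> n) ^ 3 * ln (real n) / (real n * cn n (\<beta> n))))}
           \<ge> 1 - 2 / real n"
    if H1: "\<bar>bn n (\<beta> n) ^ 3 / cn n (\<beta> n)\<bar> \<le> \<delta> * \<bar>real n / ln (real n)\<bar>" and n4: "n \<ge> 4" for n
  proof -
    define b where "b = \<beta> n"
    define B where "B = bn n b"
    define Cc where "Cc = cn n b"
    define \<epsilon> where "\<epsilon> = sqrt (real n * ln (real n))"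
    define m where "m = exp (-2) / B"
    define M where "M = exp 2 / Cc"
    have n2: "n \<ge> 2" and n3: "n \<ge> 3" using n4 by auto
    note f = bn_cn_facts[OF n2]
    have Cc2: "Cc \<ge> 2" and CB: "Cc \<le> B" using f(2)[of b] f(3)[of b] by (simp_all add: B_def Cc_def)
    have B0: "B > 0" and C0': "Cc > 0" using Cc2 CB by auto
    have ln1: "ln (real n) \<ge> 1"
    proof -
      have "exp 1 \<le> real n" using exp_le n4 by linarith
      then have "ln (exp 1) \<le> ln (real n)" using n4 by (subst ln_le_cancel_iff) auto
      then show ?thesis by simp
    qed
    have lnp: "ln (real n) > 0" using ln1 by simp
    have e0: "\<epsilon> \<ge> 0" unfolding \<epsilon>_def using lnp by simp
    have e2: "\<epsilon>^2 = real n * ln (real n)" unfolding \<epsilon>_def using lnp by simp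
    have B2: "B^2 \<le> B^3 / Cc"
    proof -
      have "B^2 * Cc \<le> B^2 * B" using CB by (intro mult_left_mono) auto
      then show ?thesis using C0' by (simp add: field_simps power3_eq_cube power2_eq_square)
    qed
    have H: "B^3 / Cc \<le> \<delta> * (real n / ln (real n))"
      using H1 B0 C0' lnp n4 by (simp add: B_def Cc_def b_def abs_of_pos)
    have "(B * \<epsilon>)^2 = B^2 * (real n * ln (real n))" by (simp add: power_mult_distrib e2)
    also have "\<dots> \<le> (\<delta> * (real n / ln (real n))) * (real n * ln (real n))"
      using B2 H lnp n4 by (intro mult_right_mono) auto
    also have "\<dots> = \<delta> * (real n)^2" using lnp by (simp add: field_simps power2_eq_square)
    also have "\<dots> = (real n / (8 * exp 2))^2"
      by (simp add: \<delta>_def power2_eq_square field_simps flip: exp_add)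
    finally have "(B * \<epsilon>)^2 \<le> (real n / (8 * exp 2))^2" .
    then have Be: "B * \<epsilon> \<le> real n / (8 * exp 2)" by (rule power2_le_imp_le) simp
    then have Be': "exp 2 * (B * \<epsilon>) \<le> real n / 8" by (simp add: field_simps)
    have m0: "m > 0" unfolding m_def using B0 by simp
    have mform: "m = 1 / (exp 2 * B)" unfolding m_def by (simp add: exp_minus field_simps)
    have c1: "2 * \<epsilon> < m * (real n - 1)"
    proof -
      have "2 * \<epsilon> * (exp 2 * B) < real n - 1" using Be' n4 by (simp add: algebra_simps)
      then show ?thesis unfolding mform using B0 by (simp add: field_simps)
    qed
    have c2: "real n * \<epsilon> / (m * (real n - 2)) \<le> (real n - 1) / 2"
    proof -
      have "real n * (exp 2 * (B * \<epsilon>)) \<le> real n * (real n / 8)" using Be' by (intro mult_left_mono) auto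
      also have "\<dots> \<le> (real n - 1) * (real n - 2) / 2"
      proof -
        have "(real n)^2 / 4 \<le> (real n - 1) * (real n - 2)"
        proof -
          have "(real n - 1) * (real n - 2) - (real n)^2 / 4 = 3 / 4 * ((real n - 4) * real n) + 2"
            by (simp add: algebra_simps power2_eq_square)
          moreover have "(real n - 4) * real n \<ge> 0" using n4 by simp
          ultimately show ?thesis using n4 by linarith
        qed
        then show ?thesis by (simp add: power2_eq_square)
      qed
      finally have "real n * (exp 2 * (B * \<epsilon>)) \<le> (real n - 1) * (real n - 2) / 2" .
      then show ?thesis unfolding mform using B0 n4 by (simp add: field_simps)
    qed
    have W: "\<And>i j. i < n \<Longrightarrow> j < n \<Longrightarrow> i \<noteq> j \<Longrightarrow> win m M (b i + b j)"
      unfolding m_def M_def B_def Cc_def using window[OF n2] by blast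
    have sub: "{G. \<forall>k<n. \<bar>gr n G b k\<bar> \<le> \<epsilon>} \<subseteq>
             {G. (\<exists>b'. is_mle n G b') \<and> (\<exists>b0. is_restricted_mle n r b G b0) \<and>
                 (\<forall>b' b0. is_mle n G b' \<longrightarrow> is_restricted_mle n r b G b0 \<longrightarrow>
                    (\<forall>i\<in>{r..<n}. \<bar>b' i - b0 i\<bar>
                        \<le> C * B ^ 3 * ln (real n) / (real n * Cc)))}"
    proof
      fix G assume "G \<in> {G. \<forall>k<n. \<bar>gr n G b k\<bar> \<le> \<epsilon>}"
      then have eps: "\<And>k. k < n \<Longrightarrow> \<bar>gr n G b k\<bar> \<le> \<epsilon>" by auto
      note ge = good_event[OF n3 m0 W eps c1 c2, of r]
      show "G \<in> {G. (\<exists>b'. is_mle n G b') \<and> (\<exists>b0. is_restricted_mle n r b G b0) \<and>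
                 (\<forall>b' b0. is_mle n G b' \<longrightarrow> is_restricted_mle n r b G b0 \<longrightarrow>
                    (\<forall>i\<in>{r..<n}. \<bar>b' i - b0 i\<bar>
                        \<le> C * B ^ 3 * ln (real n) / (real n * Cc)))}"
      proof (intro CollectI conjI allI impI ballI)
        show "\<exists>b'. is_mle n G b'" using ge by blast
        show "\<exists>b0. is_restricted_mle n r b G b0" using ge by blast
      next
        fix b' b0 i assume h: "is_mle n G b'" "is_restricted_mle n r b G b0" "i \<in> {r..<n}"
        have X: "\<bar>b' i - b0 i\<bar> * ((real n - 1) * m) \<le> M * (real n * (2 * real r * M) / (m * (real n - 2)) + 2 * real r)"
          using ge h by blast
        have "\<bar>b' i - b0 i\<bar> \<le> 12 * real r * exp 8 * B^3 * ln (real n) / (real n * Cc)"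
          by (rule final_arith[OF Cc2 CB _ _ ln1]) (use X n4 in \<open>simp_all add: m_def M_def\<close>)
        then show "\<bar>b' i - b0 i\<bar> \<le> C * B ^ 3 * ln (real n) / (real n * Cc)" by (simp add: C_def)
      qed
    qed
    have "1 - 2 / real n \<le> measure_pmf.prob (beta_model n b) {G. \<forall>k<n. \<bar>gr n G b k\<bar> \<le> \<epsilon>}"
      using prob_good[OF n3, of b] by (simp add: \<epsilon>_def)
    also have "\<dots> \<le> measure_pmf.prob (beta_model n b)
             {G. (\<exists>b'. is_mle n G b') \<and> (\<exists>b0. is_restricted_mle n r b G b0) \<and>
                 (\<forall>b' b0. is_mle n G b' \<longrightarrow> is_restricted_mle n r b G b0 \<longrightarrow>
                    (\<forall>i\<in>{r..<n}. \<bar>b' i - b0 i\<bar>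
                        \<le> C * B ^ 3 * ln (real n) / (real n * Cc)))}"
      using sub by (intro measure_pmf.finite_measure_mono) auto
    finally show ?thesis by (simp add: b_def B_def Cc_def)
  qed
  show ?thesis
  proof (intro exI conjI)
    show "C > 0" by (rule C0)
    show "(2::real) > 0" by simp
    show "\<forall>\<^sub>F n in sequentially.
           measure_pmf.prob (beta_model n (\<beta> n))
             {G. (\<exists>b. is_mle n G b) \<and> (\<exists>b0. is_restricted_mle n r (\<beta> n) G b0) \<and>
                 (\<forall>b b0. is_mle n G b \<longrightarrow> is_restricted_mle n r (\<beta> n) G b0 \<longrightarrow>
                    (\<forall>i\<in>{r..<n}. \<bar>b i - b0 i\<bar>
                        \<le> C * bn n (\<beta> n) ^ 3 * ln (real n) / (real n * cn n (\<beta> n))))}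
           \<ge> 1 - 2 / real n"
      using eventually_conj[OF ev1 ev2] by (rule eventually_mono) (use main in blast)
  qed
qed

end
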